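(* Let $N\ge1$, $W,N_0,P_A,P^{max}>0$ and for $i=1,\dots,N$ let $D_i,\zeta_i,h_i,g_i>0$. Consider the problem: minimize $\tau_0+\sum_{i=1}^N\tau_{S_i}$ over $\tau_0,\tau_{S_i},P_{S_i}\ge0$ subject to, for all $i$, $P_{S_i}\tau_{S_i}\le\zeta_iP_Ah_i\tau_0$, $\tau_{S_i}W\log_2\left(1+\frac{P_{S_i}g_i}{WN_0}\right)\ge D_i$, and $P_{S_i}\le P^{max}$. For each $i$ let $\gamma_i=\frac{g_i\zeta_iP_Ah_i}{WN_0}$, $\alpha_i=\mathbb{L}_0\!\left(\frac{\gamma_i-1}{e}\right)+1$ ($\mathbb{L}_0$ the principal Lambert W function), $\dot\tau_{S_i}=\frac{D_i\ln2}{W\alpha_i}$, $\dot\tau_0^i=\frac{D_i\ln2}{W\alpha_i\gamma_i}\left(2^{\alpha_i/\ln2}-1\right)$, $\ddot\tau_{S_i}=\frac{D_i}{W\log_2(1+P^{max}g_i/(WN_0))}$, $\ddot\tau_0^i=\frac{P^{max}\ddot\tau_{S_i}}{\zeta_iP_Ah_i}$, and set $\hat\tau_0^i=\dot\tau_0^i$ if $\zeta_iP_Ah_i\dot\tau_0^i/\dot\tau_{S_i}\le P^{max}$ and $\hat\tau_0^i=\ddot\tau_0^i$ otherwise. Then $\max_{i=1,\dots,N}\hat\tau_0^i$ is a lower bound on the optimal value of $\tau_0$ in this problem.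
   Context: Multiple source wireless powered network: all sources harvest energy from an AP of power $P_A$ during a common time $\tau_0$ (source $i$ harvests $\zeta_iP_Ah_i\tau_0$), then each source $i$ transmits $D_i$ bits in its own slot of length $\tau_{S_i}$ with power $P_{S_i}$ over an AWGN channel of gain $g_i$. $\hat\tau_0^i$ is the optimal energy harvesting time when source $i$ is alone in the network. *)

theory Defs
  imports Complex_Main
begin

text \<open>Principal branch of the Lambert W function (defined on [-1/e, inf)):
  the unique w \<ge> -1 with w * exp w = x.\<close>
definition lambertW0 :: "real \<Rightarrow> real" where
  "lambertW0 x = (THE w. -1 \<le> w \<and> w * exp w = x)"

definition wpn_feasible ::
  "nat \<Rightarrow> real \<Rightarrow> real \<Rightarrow> real \<Rightarrow> real \<Rightarrow> (nat \<Rightarrow> real) \<Rightarrow> (nat \<Rightarrow> real)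
   \<Rightarrow> (nat \<Rightarrow> real) \<Rightarrow> (nat \<Rightarrow> real) \<Rightarrow> real \<Rightarrow> (nat \<Rightarrow> real) \<Rightarrow> (nat \<Rightarrow> real) \<Rightarrow> bool" where
  "wpn_feasible N W N0 PA Pmax D zeta h g tau0 tauS PS \<longleftrightarrow>
     tau0 \<ge> 0 \<and>
     (\<forall>i\<in>{1..N}. tauS i \<ge> 0 \<and> PS i \<ge> 0 \<and>
        PS i * tauS i \<le> zeta i * PA * h i * tau0 \<and>
        tauS i * W * log 2 (1 + PS i * g i / (W * N0)) \<ge> D i \<and>
        PS i \<le> Pmax)"

definition wpn_objective :: "nat \<Rightarrow> real \<Rightarrow> (nat \<Rightarrow> real) \<Rightarrow> real" where
  "wpn_objective N tau0 tauS = tau0 + (\<Sum>i=1..N. tauS i)"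

definition wpn_optimal ::
  "nat \<Rightarrow> real \<Rightarrow> real \<Rightarrow> real \<Rightarrow> real \<Rightarrow> (nat \<Rightarrow> real) \<Rightarrow> (nat \<Rightarrow> real)
   \<Rightarrow> (nat \<Rightarrow> real) \<Rightarrow> (nat \<Rightarrow> real) \<Rightarrow> real \<Rightarrow> (nat \<Rightarrow> real) \<Rightarrow> (nat \<Rightarrow> real) \<Rightarrow> bool" where
  "wpn_optimal N W N0 PA Pmax D zeta h g tau0 tauS PS \<longleftrightarrow>
     wpn_feasible N W N0 PA Pmax D zeta h g tau0 tauS PS \<and>
     (\<forall>t0 tS P. wpn_feasible N W N0 PA Pmax D zeta h g t0 tS P \<longrightarrow>
        wpn_objective N tau0 tauS \<le> wpn_objective N t0 tS)"

definition gamma_i :: "real \<Rightarrow> real \<Rightarrow> real \<Rightarrow> real \<Rightarrow> real \<Rightarrow> real \<Rightarrow> real" where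
  "gamma_i W N0 PA zeta h g = g * zeta * PA * h / (W * N0)"

definition alpha_i :: "real \<Rightarrow> real" where
  "alpha_i \<gamma> = lambertW0 ((\<gamma> - 1) / exp 1) + 1"

definition tau0_hat ::
  "real \<Rightarrow> real \<Rightarrow> real \<Rightarrow> real \<Rightarrow> real \<Rightarrow> real \<Rightarrow> real \<Rightarrow> real \<Rightarrow> real" where
  "tau0_hat W N0 PA Pmax D zeta h g =
     (let \<gamma> = gamma_i W N0 PA zeta h g;
          \<alpha> = alpha_i \<gamma>;
          tSdot = D * ln 2 / (W * \<alpha>);
          t0dot = D * ln 2 / (W * \<alpha> * \<gamma>) * (2 powr (\<alpha> / ln 2) - 1);
          tSddot = D / (W * log 2 (1 + Pmax * g / (W * N0)));
          t0ddot = Pmax * tSddot / (zeta * PA * h)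
      in if zeta * PA * h * t0dot / tSdot \<le> Pmax then t0dot else t0ddot)"

end

theory Submission imports Defs begin

lemma exp_strict: fixes x :: real assumes "x \<noteq> 0" shows "1 + x < exp x"
proof (cases "1 + x/2 < 0")
  case True then show ?thesis using exp_gt_zero[of x] by linarith
next
  case False
  have "exp x = exp (x/2) * exp (x/2)" by (simp flip: exp_add)
  also have "\<dots> \<ge> (1 + x/2) * (1 + x/2)"
    using False exp_ge_add_one_self[of "x/2"] by (intro mult_mono) auto
  finally have "exp x \<ge> 1 + x + x*x/4" by (simp add: algebra_simps)
  moreover have "x*x > 0" using assms not_real_square_gt_zero by blast
  ultimately show ?thesis by linarith
qed

lemma h_mono: fixes v a :: real assumes "0 \<le> v" "v \<le> a"
  shows "exp v * (v - 1) \<le> exp a * (a - 1)"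
proof (rule DERIV_nonneg_imp_nondecreasing[OF assms(2)])
  fix x assume "v \<le> x" "x \<le> a"
  show "\<exists>y. DERIV (\<lambda>x. exp x * (x - 1)) x :> y \<and> y \<ge> 0"
    by (rule exI[of _ "exp x * (x - 1) + exp x * 1"])
       (use \<open>v \<le> x\<close> assms in \<open>auto intro!: derivative_eq_intros simp: algebra_simps\<close>)
qed

lemma psi_strict: fixes u v a \<gamma> :: real
  assumes "0 < u" "u < v" "v \<le> a" "(a - 1) * exp a = \<gamma> - 1"
  shows "(\<gamma> - 1 + exp v) / v < (\<gamma> - 1 + exp u) / u"
proof -
  have t: "exp u > exp v * (1 + (u - v))"
    using exp_strict[of "u - v"] assms by (simp add: exp_diff field_simps)
  have hm: "exp v * (v - 1) \<le> \<gamma> - 1" using h_mono[of v a] assms by (simp add: mult.commute)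
  have "u * (\<gamma> - 1 + exp v) \<le> v * (\<gamma> - 1 + exp v * (1 + (u - v)))"
  proof -
    have "v * (\<gamma> - 1 + exp v * (1 + (u - v))) - u * (\<gamma> - 1 + exp v) = (v - u) * (\<gamma> - 1 - exp v * (v - 1))"
      by (simp add: algebra_simps)
    moreover have "(v - u) * (\<gamma> - 1 - exp v * (v - 1)) \<ge> 0" using hm assms by simp
    ultimately show ?thesis by linarith
  qed
  also have "\<dots> < v * (\<gamma> - 1 + exp u)" using t assms by simp
  finally show ?thesis using assms by (simp add: field_simps)
qed

lemma lw_ex: fixes y :: real assumes "y \<ge> -1/exp 1" shows "\<exists>!w. -1 \<le> w \<and> w * exp w = y"
proof -
  define b where "b = max 0 y"
  have "\<exists>w. -1 \<le> w \<and> w \<le> b \<and> w * exp w = y"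
  proof (rule IVT')
    show "(-1) * exp (-1) \<le> y" using assms by (simp add: exp_minus field_simps)
    have "b * exp b \<ge> b * 1" unfolding b_def by (intro mult_left_mono) auto
    then show "y \<le> b * exp b" unfolding b_def by linarith
    show "-1 \<le> b" unfolding b_def by simp
    show "continuous_on {-1..b} (\<lambda>w. w * exp w)" by (intro continuous_intros)
  qed
  then obtain w where w: "-1 \<le> w" "w * exp w = y" by blast
  have mono: "w1 * exp w1 < w2 * exp w2" if "-1 \<le> w1" "w1 < w2" for w1 w2 :: real
  proof (rule DERIV_pos_imp_increasing_open[OF that(2)])
    fix x assume "w1 < x" "x < w2"
    show "\<exists>y. DERIV (\<lambda>x. x * exp x) x :> y \<and> y > 0"
    proof (rule exI[of _ "1 * exp x + x * exp x"], intro conjI)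
      show "DERIV (\<lambda>x. x * exp x) x :> 1 * exp x + x * exp x" by (auto intro!: derivative_eq_intros)
      have "(1 + x) * exp x > 0" using \<open>w1 < x\<close> that by simp
      then show "1 * exp x + x * exp x > 0" by (simp add: algebra_simps)
    qed
  next
    show "continuous_on {w1..w2} (\<lambda>x. x * exp x)" by (intro continuous_intros)
  qed
  show ?thesis
  proof (rule ex1I[of _ w])
    show "-1 \<le> w \<and> w * exp w = y" using w by simp
    fix w' assume "-1 \<le> w' \<and> w' * exp w' = y"
    then show "w' = w" using mono[of w w'] mono[of w' w] w by (cases "w < w'"; cases "w' < w") auto
  qed
qed

lemma alpha_props: fixes \<gamma> :: real assumes "\<gamma> > 0"
  shows "alpha_i \<gamma> > 0" "(alpha_i \<gamma> - 1) * exp (alpha_i \<gamma>) = \<gamma> - 1"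
proof -
  define y where "y = (\<gamma> - 1) / exp 1"
  have y: "y > -1/exp 1" using assms unfolding y_def by (simp add: field_simps)
  define w where "w = lambertW0 y"
  have w: "-1 \<le> w \<and> w * exp w = y"
    unfolding w_def lambertW0_def by (rule theI') (use lw_ex y in auto)
  have a: "alpha_i \<gamma> = w + 1" unfolding alpha_i_def w_def y_def by simp
  have "w \<noteq> -1" using w y by (auto simp: exp_minus field_simps)
  then show "alpha_i \<gamma> > 0" using a w by simp
  have "exp (w + 1) = exp w * exp 1" by (simp add: exp_add)
  then show "(alpha_i \<gamma> - 1) * exp (alpha_i \<gamma>) = \<gamma> - 1"
    using w unfolding a y_def by (simp add: field_simps)
qed

lemma single:
  fixes W N0 PA Pmax D zeta h g t0 tS P :: real
  assumes pos: "W > 0" "N0 > 0" "PA > 0" "Pmax > 0" "D > 0" "zeta > 0" "h > 0" "g > 0"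
    and f: "tS \<ge> 0" "P \<ge> 0" "P * tS \<le> zeta * PA * h * t0"
      "tS * W * log 2 (1 + P * g / (W * N0)) \<ge> D" "P \<le> Pmax"
    and lt: "t0 < tau0_hat W N0 PA Pmax D zeta h g"
  shows "\<exists>tS' P'. tS' \<ge> 0 \<and> P' \<ge> 0 \<and> P' * tS' \<le> zeta * PA * h * tau0_hat W N0 PA Pmax D zeta h g \<and>
     tS' * W * log 2 (1 + P' * g / (W * N0)) \<ge> D \<and> P' \<le> Pmax \<and>
     tau0_hat W N0 PA Pmax D zeta h g + tS' < t0 + tS"
proof -
  define c where "c = zeta * PA * h"
  have c: "c > 0" using pos unfolding c_def by simp
  define \<gamma> where "\<gamma> = gamma_i W N0 PA zeta h g"
  have g\<gamma>: "\<gamma> = g * c / (W * N0)" unfolding \<gamma>_def gamma_i_def c_def by (simp add: algebra_simps)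
  have \<gamma>: "\<gamma> > 0" using pos c unfolding g\<gamma> by simp
  define \<alpha> where "\<alpha> = alpha_i \<gamma>"
  have \<alpha>: "\<alpha> > 0" "(\<alpha> - 1) * exp \<alpha> = \<gamma> - 1" using alpha_props[OF \<gamma>] unfolding \<alpha>_def by auto
  define K where "K = D * ln 2 / W"
  have K: "K > 0" using pos unfolding K_def by simp
  define x where "x = P * g / (W * N0)"
  define u where "u = ln (1 + x)"
  have x0: "x \<ge> 0" using f pos unfolding x_def by simp
  have eu: "exp u = 1 + x" unfolding u_def using x0 by simp
  have rate: "tS * W * (u / ln 2) \<ge> D" using f(4) unfolding u_def x_def log_def by simp
  have tSu: "tS * u \<ge> K"
  proof -
    have "tS * u * W \<ge> D * ln 2" using rate by (simp add: field_simps)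
    then show ?thesis unfolding K_def using pos by (simp add: field_simps)
  qed
  have tSpos: "tS > 0" using tSu K f(1) by (cases "tS = 0") auto
  have upos: "u > 0"
  proof (rule ccontr)
    assume "\<not> u > 0"
    then have "tS * u \<le> 0" using tSpos by (simp add: mult_nonneg_nonpos)
    then show False using tSu K by linarith
  qed
  have xdiv: "x / \<gamma> = P / c" unfolding x_def g\<gamma> using pos c by (simp add: field_simps)
  have t0x: "t0 \<ge> x * tS / \<gamma>"
  proof -
    have "x * tS / \<gamma> = P * tS / c" using xdiv by (metis times_divide_eq_left mult.commute)
    also have "\<dots> \<le> t0" using f(3) c unfolding c_def[symmetric] by (simp add: field_simps)
    finally show ?thesis .
  qed
  have obj: "t0 + tS \<ge> tS * (\<gamma> - 1 + exp u) / \<gamma>"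
  proof -
    have "tS * (\<gamma> - 1 + exp u) / \<gamma> = x * tS / \<gamma> + tS" using eu \<gamma> by (simp add: field_simps)
    then show ?thesis using t0x by linarith
  qed
  define tSdot where "tSdot = D * ln 2 / (W * \<alpha>)"
  define t0dot where "t0dot = D * ln 2 / (W * \<alpha> * \<gamma>) * (2 powr (\<alpha> / ln 2) - 1)"
  define tSddot where "tSddot = D / (W * log 2 (1 + Pmax * g / (W * N0)))"
  define t0ddot where "t0ddot = Pmax * tSddot / (zeta * PA * h)"
  have hat: "tau0_hat W N0 PA Pmax D zeta h g = (if c * t0dot / tSdot \<le> Pmax then t0dot else t0ddot)"
    unfolding tau0_hat_def Let_def tSdot_def t0dot_def tSddot_def t0ddot_def \<alpha>_def \<gamma>_def c_def by simp
  have p2: "2 powr (\<alpha> / ln 2) = exp \<alpha>" unfolding powr_def by simp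
  have tSdot': "tSdot = K / \<alpha>" unfolding tSdot_def K_def by simp
  have t0dot': "t0dot = K * (exp \<alpha> - 1) / (\<alpha> * \<gamma>)" unfolding t0dot_def K_def p2 by simp
  have ratio: "c * t0dot / tSdot = c * (exp \<alpha> - 1) / \<gamma>"
    unfolding tSdot' t0dot' using K \<alpha> \<gamma> by (simp add: field_simps)
  show ?thesis
  proof (cases "c * t0dot / tSdot \<le> Pmax")
    case True
    then have H: "tau0_hat W N0 PA Pmax D zeta h g = t0dot" using hat by simp
    define P' where "P' = c * (exp \<alpha> - 1) / \<gamma>"
    have ea: "exp \<alpha> > 1" using \<alpha> by simp
    have P'0: "P' \<ge> 0" unfolding P'_def using c \<gamma> ea by simp
    have e1: "P' * tSdot = c * t0dot" using \<gamma> \<alpha> K unfolding P'_def tSdot' t0dot' by (simp add: field_simps)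
    have e2: "1 + P' * g / (W * N0) = exp \<alpha>" unfolding P'_def g\<gamma> using pos c by (simp add: field_simps)
    have e3: "tSdot * W * log 2 (1 + P' * g / (W * N0)) = D"
      unfolding e2 tSdot_def log_def using pos \<alpha> by (simp add: field_simps)
    have sum: "t0dot + tSdot = K * exp \<alpha> / \<gamma>"
    proof -
      have "t0dot + tSdot = K * (\<gamma> - 1 + exp \<alpha>) / (\<alpha> * \<gamma>)"
        unfolding t0dot' tSdot' using \<alpha> \<gamma> by (simp add: field_simps)
      also have "\<gamma> - 1 + exp \<alpha> = \<alpha> * exp \<alpha>" using \<alpha>(2) by (simp add: algebra_simps)
      finally show ?thesis using \<alpha> by simp
    qed
    have strict: "t0dot + tSdot < t0 + tS"
    proof (cases "u = \<alpha>")
      case True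
      have "tS \<ge> tSdot" using tSu \<alpha> unfolding tSdot' True by (simp add: field_simps)
      then have "x * tS / \<gamma> \<ge> x * tSdot / \<gamma>" using x0 \<gamma> by (simp add: divide_right_mono mult_left_mono)
      moreover have "x * tSdot / \<gamma> = t0dot" unfolding tSdot' t0dot' using eu True by simp
      ultimately show ?thesis using t0x lt H by linarith
    next
      case False
      have "exp (u - \<alpha>) > 1 + (u - \<alpha>)" using exp_strict False by simp
      then have "exp u > exp \<alpha> * (1 + (u - \<alpha>))" by (simp add: exp_diff field_simps)
      then have "\<gamma> - 1 + exp u > u * exp \<alpha>" using \<alpha>(2) by (simp add: algebra_simps)
      then have "tS * (\<gamma> - 1 + exp u) / \<gamma> > tS * (u * exp \<alpha>) / \<gamma>"
        using tSpos \<gamma> by (simp add: divide_strict_right_mono)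
      moreover have "tS * (u * exp \<alpha>) / \<gamma> \<ge> K * exp \<alpha> / \<gamma>"
        using tSu \<gamma> by (simp add: divide_right_mono mult_right_mono mult.assoc[symmetric])
      ultimately show ?thesis using obj sum by linarith
    qed
    show ?thesis
      by (rule exI[of _ tSdot], rule exI[of _ P'])
         (use e1 e3 P'0 True ratio strict H K \<alpha> in \<open>auto simp: tSdot' P'_def c_def\<close>)
  next
    case False
    then have H: "tau0_hat W N0 PA Pmax D zeta h g = t0ddot" using hat by simp
    define xm where "xm = Pmax * g / (W * N0)"
    define um where "um = ln (1 + xm)"
    have xm: "xm > 0" unfolding xm_def using pos by simp
    have eum: "exp um = 1 + xm" unfolding um_def using xm by simp
    have um: "um > 0" unfolding um_def using xm by simp
    have tSddot': "tSddot = K / um" unfolding tSddot_def K_def um_def xm_def log_def by simp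
    have t0ddot': "t0ddot = K * (exp um - 1) / (um * \<gamma>)"
    proof -
      have "Pmax / c = xm / \<gamma>" unfolding xm_def g\<gamma> using pos c by (simp add: field_simps)
      then have "Pmax * \<gamma> = xm * c" using c \<gamma> by (simp add: field_simps)
      then show ?thesis unfolding t0ddot_def c_def[symmetric] tSddot' eum
        using c \<gamma> um by (simp add: field_simps)
    qed
    have "c * (exp \<alpha> - 1) / \<gamma> > Pmax" using False ratio by simp
    then have "c * (exp \<alpha> - 1) > Pmax * \<gamma>" using \<gamma> by (simp only: pos_less_divide_eq)
    moreover have "Pmax * \<gamma> = c * xm" unfolding xm_def g\<gamma> using pos c by (simp add: field_simps)
    ultimately have "exp \<alpha> - 1 > xm" using c by (metis mult_less_cancel_left_pos)
    then have "exp um < exp \<alpha>" using eum by linarith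
    then have umA: "um < \<alpha>" by simp
    have "x \<le> xm" unfolding x_def xm_def using f(5) pos by (simp add: divide_right_mono)
    then have uum: "u \<le> um" unfolding u_def um_def using x0 by simp
    have sum: "t0ddot + tSddot = K * (\<gamma> - 1 + exp um) / (um * \<gamma>)"
      unfolding t0ddot' tSddot' using um \<gamma> by (simp add: field_simps)
    have strict: "t0ddot + tSddot < t0 + tS"
    proof (cases "u = um")
      case True
      have "tS \<ge> tSddot" using tSu um unfolding tSddot' True by (simp add: field_simps)
      then have "x * tS / \<gamma> \<ge> x * tSddot / \<gamma>" using x0 \<gamma> by (simp add: divide_right_mono mult_left_mono)
      moreover have "x * tSddot / \<gamma> = t0ddot" unfolding tSddot' t0ddot' using eu True by simp
      ultimately show ?thesis using t0x lt H by linarith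
    next
      case False
      then have "u < um" using uum by simp
      then have ps: "(\<gamma> - 1 + exp um) / um < (\<gamma> - 1 + exp u) / u"
        using psi_strict[of u um \<alpha> \<gamma>] upos umA \<alpha>(2) by simp
      have "tS * (\<gamma> - 1 + exp u) / \<gamma> = (tS * u) * ((\<gamma> - 1 + exp u) / u) / \<gamma>" using upos by simp
      also have "\<dots> \<ge> K * ((\<gamma> - 1 + exp u) / u) / \<gamma>"
      proof -
        have "exp u > 1" using upos by simp
        then have "\<gamma> - 1 + exp u > 0" using \<gamma> by linarith
        then have "(\<gamma> - 1 + exp u) / u > 0" using upos by simp
        then have "K * ((\<gamma> - 1 + exp u) / u) \<le> (tS * u) * ((\<gamma> - 1 + exp u) / u)"
          using tSu by (intro mult_right_mono) auto
        then show ?thesis using \<gamma> by (intro divide_right_mono) auto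
      qed
      finally have "t0 + tS \<ge> K * ((\<gamma> - 1 + exp u) / u) / \<gamma>" using obj by linarith
      moreover have "K * ((\<gamma> - 1 + exp u) / u) / \<gamma> > K * ((\<gamma> - 1 + exp um) / um) / \<gamma>"
      proof -
        have "K * ((\<gamma> - 1 + exp um) / um) < K * ((\<gamma> - 1 + exp u) / u)"
          using ps K by (intro mult_strict_left_mono) auto
        then show ?thesis using \<gamma> by (intro divide_strict_right_mono) auto
      qed
      moreover have "K * ((\<gamma> - 1 + exp um) / um) / \<gamma> = t0ddot + tSddot" unfolding sum by simp
      ultimately show ?thesis by linarith
    qed
    have e1: "Pmax * tSddot = c * t0ddot" unfolding t0ddot_def c_def[symmetric] using c by simp
    have e3: "tSddot * W * log 2 (1 + Pmax * g / (W * N0)) = D"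
    proof -
      have "log 2 (1 + Pmax * g / (W * N0)) > 0" using xm unfolding xm_def by simp
      then show ?thesis unfolding tSddot_def using pos by simp
    qed
    show ?thesis
      by (rule exI[of _ tSddot], rule exI[of _ Pmax])
         (use e1 e3 strict H K um pos in \<open>auto simp: tSddot' c_def\<close>)
  qed
qed

theorem lemma4:
  fixes N :: nat and W N0 PA Pmax :: real
    and D zeta h g :: "nat \<Rightarrow> real"
    and tau0 :: real and tauS PS :: "nat \<Rightarrow> real"
  assumes "N \<ge> 1" and "W > 0" and "N0 > 0" and "PA > 0" and "Pmax > 0"
    and "\<forall>i\<in>{1..N}. D i > 0 \<and> zeta i > 0 \<and> h i > 0 \<and> g i > 0"
    and "wpn_optimal N W N0 PA Pmax D zeta h g tau0 tauS PS"
  shows "(MAX i\<in>{1..N}. tau0_hat W N0 PA Pmax (D i) (zeta i) (h i) (g i)) \<le> tau0"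
proof (rule ccontr)
  define F where "F = (\<lambda>i. tau0_hat W N0 PA Pmax (D i) (zeta i) (h i) (g i))"
  assume "\<not> ?thesis"
  then have M: "Max (F ` {1..N}) > tau0" unfolding F_def by simp
  have "Max (F ` {1..N}) \<in> F ` {1..N}" using assms(1) by (intro Max_in) auto
  then obtain i where i: "i \<in> {1..N}" "F i > tau0" using M by auto
  have feas: "wpn_feasible N W N0 PA Pmax D zeta h g tau0 tauS PS"
    and opt: "\<And>t0 tS P. wpn_feasible N W N0 PA Pmax D zeta h g t0 tS P \<Longrightarrow>
        wpn_objective N tau0 tauS \<le> wpn_objective N t0 tS"
    using assms(7) unfolding wpn_optimal_def by auto
  note fi = feas[unfolded wpn_feasible_def]
  have pi: "D i > 0" "zeta i > 0" "h i > 0" "g i > 0" using assms(6) i(1) by auto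
  obtain tS' P' where new: "tS' \<ge> 0" "P' \<ge> 0" "P' * tS' \<le> zeta i * PA * h i * F i"
     "tS' * W * log 2 (1 + P' * g i / (W * N0)) \<ge> D i" "P' \<le> Pmax" "F i + tS' < tau0 + tauS i"
    using single[of W N0 PA Pmax "D i" "zeta i" "h i" "g i" "tauS i" "PS i" tau0] assms(2-5) pi fi i
    unfolding F_def by fastforce
  define tS2 where "tS2 = tauS(i := tS')"
  define P2 where "P2 = PS(i := P')"
  have "wpn_feasible N W N0 PA Pmax D zeta h g (F i) tS2 P2"
    unfolding wpn_feasible_def
  proof (intro conjI ballI)
    show "0 \<le> F i" using fi i by linarith
    fix j assume j: "j \<in> {1..N}"
    show "0 \<le> tS2 j" "0 \<le> P2 j" "P2 j \<le> Pmax"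
      "D j \<le> tS2 j * W * log 2 (1 + P2 j * g j / (W * N0))"
      using new fi j unfolding tS2_def P2_def by auto
    show "P2 j * tS2 j \<le> zeta j * PA * h j * F i"
    proof (cases "j = i")
      case True then show ?thesis using new unfolding tS2_def P2_def by simp
    next
      case False
      have "PS j * tauS j \<le> zeta j * PA * h j * tau0" using fi j by blast
      also have "\<dots> \<le> zeta j * PA * h j * F i"
      proof -
        have "zeta j * PA * h j > 0" using assms(4,6) j by auto
        then show ?thesis using i by (intro mult_left_mono) auto
      qed
      finally show ?thesis using False unfolding tS2_def P2_def by simp
    qed
  qed
  then have le: "wpn_objective N tau0 tauS \<le> wpn_objective N (F i) tS2" by (rule opt)
  have s1: "sum tauS {1..N} = tauS i + sum tauS ({1..N} - {i})" using i by (intro sum.remove) auto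
  have s2: "sum tS2 {1..N} = tS2 i + sum tS2 ({1..N} - {i})" using i by (intro sum.remove) auto
  have s3: "sum tS2 ({1..N} - {i}) = sum tauS ({1..N} - {i})" unfolding tS2_def by (intro sum.cong) auto
  show False using le new(6) s1 s2 s3 unfolding wpn_objective_def tS2_def by simp
qed

end
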